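(* Let $m\ge 1$, $k\ge 2$ and $n\ge k-1$. Let $P(\mathbf x)=\prod_{i=1}^n\big((x_i-1)^{\underline m}\big)^k$. Let $P_0$ be the unique polynomial in $V_{m,k}$ such that $P-P_0$ has a zero of multiplicity at least $k$ at every point of $mB^n\setminus\{\mathbf 0\}$ and a zero of multiplicity at least $k-1$ at $\mathbf 0$. Then the homogeneous component of $P_0$ of degree $mn+(m+1)(k-1)-1$ is divisible by $(x_1\cdots x_n)^m$.
   Context: $mB^n=\{0,1,\ldots,m\}^n$. Falling factorials are $(y)^{\underline 0}=1$ and $(y)^{\underline j}=y(y-1)\cdots(y-j+1)$ for $j\ge1$, so $(x_i-1)^{\underline m}=(x_i-1)(x_i-2)\cdots(x_i-m)$. A polynomial has a zero of multiplicity at least $k$ at $\mathbf a$ if all its partial derivatives of order less than $k$ vanish at $\mathbf a$. For an integer $k\ge 2$, a polynomial $Q\in\mathbb{R}[x_1,\ldots,x_n]$ is called $(m,k)$-reduced if two conditions hold: $\deg Q\le mn+(m+1)(k-1)-1$, and no monomial of $Q$ is divisible by $x_{i_1}^{m+1}\cdots x_{i_k}^{m+1}$ for any indices $i_1,\ldots,i_k$ (not necessarily distinct). $V_{m,k}$ is the space of $(m,k)$-reduced polynomials. The existence and uniqueness of $P_0$ are known. *)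

theory Defs
  imports "HOL-Computational_Algebra.Polynomial"
begin

text \<open>Real polynomials in the variables x_0,...,x_(n-1) are represented by their
  coefficient functions on exponent vectors (monomials) alpha :: nat => nat.\<close>

type_synonym mpoly = "(nat \<Rightarrow> nat) \<Rightarrow> real"

definition is_mpoly :: "nat \<Rightarrow> mpoly \<Rightarrow> bool" where
  "is_mpoly n Q \<longleftrightarrow> finite {\<alpha>. Q \<alpha> \<noteq> 0} \<and> (\<forall>\<alpha>. Q \<alpha> \<noteq> 0 \<longrightarrow> (\<forall>i\<ge>n. \<alpha> i = 0))"

definition mdeg :: "nat \<Rightarrow> (nat \<Rightarrow> nat) \<Rightarrow> nat" where
  "mdeg n \<alpha> = (\<Sum>i<n. \<alpha> i)"

definition meval :: "nat \<Rightarrow> mpoly \<Rightarrow> (nat \<Rightarrow> real) \<Rightarrow> real" where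
  "meval n Q a = (\<Sum>\<alpha>\<in>{\<alpha>. Q \<alpha> \<noteq> 0}. Q \<alpha> * (\<Prod>i<n. a i ^ \<alpha> i))"

definition mone :: mpoly where
  "mone \<alpha> = (if \<alpha> = (\<lambda>_. 0) then 1 else 0)"

definition mminus :: "mpoly \<Rightarrow> mpoly \<Rightarrow> mpoly" where
  "mminus A B = (\<lambda>\<alpha>. A \<alpha> - B \<alpha>)"

definition mmul :: "mpoly \<Rightarrow> mpoly \<Rightarrow> mpoly" where
  "mmul A B = (\<lambda>\<alpha>. \<Sum>\<beta>\<in>{\<beta>. A \<beta> \<noteq> 0}.
       \<Sum>\<gamma>\<in>{\<gamma>. B \<gamma> \<noteq> 0 \<and> (\<lambda>i. \<beta> i + \<gamma> i) = \<alpha>}. A \<beta> * B \<gamma>)"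

definition var_poly :: "nat \<Rightarrow> real poly \<Rightarrow> mpoly" where
  "var_poly i g = (\<lambda>\<alpha>. if (\<forall>j. j \<noteq> i \<longrightarrow> \<alpha> j = 0) then coeff g (\<alpha> i) else 0)"

definition prod_vars :: "nat \<Rightarrow> real poly \<Rightarrow> mpoly" where
  "prod_vars n g = foldr (\<lambda>i acc. mmul (var_poly i g) acc) [0..<n] mone"

text \<open>Falling factorial (y - 1)(y - 2)...(y - m) as a univariate polynomial.\<close>
definition shifted_ffact :: "nat \<Rightarrow> real poly" where
  "shifted_ffact m = (\<Prod>j\<in>{1..m}. [:- of_nat j, 1:])"

definition pd :: "nat \<Rightarrow> mpoly \<Rightarrow> mpoly" where
  "pd i Q = (\<lambda>\<alpha>. of_nat (Suc (\<alpha> i)) * Q (\<alpha>(i := Suc (\<alpha> i))))"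

definition hpd :: "nat \<Rightarrow> (nat \<Rightarrow> nat) \<Rightarrow> mpoly \<Rightarrow> mpoly" where
  "hpd n \<beta> Q = foldr (\<lambda>i R. (pd i ^^ \<beta> i) R) [0..<n] Q"

definition zero_mult_ge :: "nat \<Rightarrow> mpoly \<Rightarrow> (nat \<Rightarrow> real) \<Rightarrow> nat \<Rightarrow> bool" where
  "zero_mult_ge n Q a k \<longleftrightarrow>
     (\<forall>\<beta>. (\<forall>i\<ge>n. \<beta> i = 0) \<longrightarrow> mdeg n \<beta> < k \<longrightarrow> meval n (hpd n \<beta> Q) a = 0)"

definition reduced :: "nat \<Rightarrow> nat \<Rightarrow> nat \<Rightarrow> mpoly \<Rightarrow> bool" where
  "reduced n m k Q \<longleftrightarrow> is_mpoly n Q \<and>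
     (\<forall>\<alpha>. Q \<alpha> \<noteq> 0 \<longrightarrow> mdeg n \<alpha> \<le> m * n + (m + 1) * (k - 1) - 1) \<and>
     (\<forall>\<alpha>. Q \<alpha> \<noteq> 0 \<longrightarrow>
        \<not> (\<exists>c::nat \<Rightarrow> nat. (\<Sum>i<n. c i) = k \<and> (\<forall>i<n. (m + 1) * c i \<le> \<alpha> i)))"

definition hom_comp :: "nat \<Rightarrow> nat \<Rightarrow> mpoly \<Rightarrow> mpoly" where
  "hom_comp n d Q = (\<lambda>\<alpha>. if mdeg n \<alpha> = d then Q \<alpha> else 0)"

definition xprod_pow :: "nat \<Rightarrow> nat \<Rightarrow> mpoly" where
  "xprod_pow n m = (\<lambda>\<alpha>. if (\<forall>i<n. \<alpha> i = m) \<and> (\<forall>i\<ge>n. \<alpha> i = 0) then 1 else 0)"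

definition mdvd :: "nat \<Rightarrow> mpoly \<Rightarrow> mpoly \<Rightarrow> bool" where
  "mdvd n A B \<longleftrightarrow> (\<exists>R. is_mpoly n R \<and> B = mmul A R)"

end

theory Submission
  imports Defs
begin

definition wt :: "nat \<Rightarrow> nat \<Rightarrow> real \<Rightarrow> real" where
  "wt e b x = (if b \<le> e then pochhammer (real (e - b) + 1) b * x ^ (e - b) else 0)"

lemma hpd_monom:
  "(pderiv ^^ b) (monom c e) = (if b \<le> e then monom (pochhammer (real (e - b) + 1) b * c) (e - b) else (0::real poly))"
  by (rule poly_eqI) (auto simp: coeff_higher_pderiv coeff_monom add.commute)

lemma poly_hpd_monom: "poly ((pderiv ^^ b) (monom c e)) x = c * wt e b x"
  by (simp add: hpd_monom wt_def poly_monom)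

lemma poly_hpd_sum:
  "poly ((pderiv ^^ b) (\<Sum>s\<in>S. monom (w s) (E s))) x = (\<Sum>s\<in>S. w s * wt (E s) b x)"
  by (simp add: higher_pderiv_sum poly_sum poly_hpd_monom)

lemma root_mult:
  fixes u :: "real poly"
  shows "(\<forall>b\<le>C. poly ((pderiv ^^ b) u) t = 0) \<Longrightarrow> [:-t,1:]^(Suc C) dvd u"
proof (induction C arbitrary: u)
  case 0
  then show ?case by (simp add: poly_eq_0_iff_dvd)
next
  case (Suc C)
  have h: "\<forall>b\<le>C. poly ((pderiv ^^ b) (pderiv u)) t = 0"
  proof (intro allI impI)
    fix b assume "b \<le> C"
    have "(pderiv ^^ b) (pderiv u) = (pderiv ^^ Suc b) u"
      by (simp only: funpow_Suc_right comp_def)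
    moreover have "poly ((pderiv ^^ Suc b) u) t = 0" using Suc.prems \<open>b \<le> C\<close> by blast
    ultimately show "poly ((pderiv ^^ b) (pderiv u)) t = 0" by metis
  qed
  have d1: "[:-t,1:]^(Suc C) dvd pderiv u" using Suc.IH[OF h] .
  have u0: "poly u t = 0" using Suc.prems by auto
  show ?case
  proof (cases "u = 0")
    case True then show ?thesis by simp
  next
    case False
    have pu: "pderiv u \<noteq> 0"
    proof
      assume "pderiv u = 0"
      then have "degree u = 0" by (simp add: pderiv_eq_0_iff)
      then obtain c where "u = [:c:]" by (metis degree_eq_zeroE)
      with u0 False show False by simp
    qed
    have "Suc C \<le> order t (pderiv u)" using d1 pu order_divides by blast
    moreover have "order t u = Suc (order t (pderiv u))" using order_pderiv[OF False u0] .
    ultimately have "Suc (Suc C) \<le> order t u" by simp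
    then show ?thesis using order_divides by blast
  qed
qed

definition Hp :: "nat \<Rightarrow> nat \<Rightarrow> real poly" where
  "Hp m c = (\<Prod>t\<in>{..m}. [:-real t,1:]^(Suc c))"

lemma dvd_prod_lin:
  fixes u :: "real poly"
  assumes "finite A" "\<forall>t\<in>A. [:-real t,1:]^C dvd u"
  shows "(\<Prod>t\<in>A. [:-real t,1:]^C) dvd u"
proof (cases "u = 0")
  case True then show ?thesis by simp
next
  case False
  show ?thesis using assms
  proof (induction A rule: finite_induct)
    case empty then show ?case by simp
  next
    case (insert x F)
    then have "(\<Prod>t\<in>F. [:-real t,1:]^C) dvd u" by auto
    then obtain q where q: "u = (\<Prod>t\<in>F. [:-real t,1:]^C) * q" by (elim dvdE)
    have q0: "q \<noteq> 0" using False q by auto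
    have pF: "poly (\<Prod>t\<in>F. [:-real t,1:]^C) (real x) \<noteq> 0"
      using insert.hyps by (auto simp: poly_prod)
    have oF: "order (real x) (\<Prod>t\<in>F. [:-real t,1:]^C) = 0"
      using pF order_root by blast
    have "C \<le> order (real x) u" using insert.prems False order_divides by blast
    also have "order (real x) u = order (real x) q"
      using q False oF by (simp add: order_mult)
    finally have "[:-real x,1:]^C dvd q" using order_divides by blast
    then show ?case using q insert.hyps by (auto simp: mult.commute mult_dvd_mono)
  qed
qed

lemma Hp_dvd:
  fixes u :: "real poly"
  assumes "\<forall>t\<le>m. \<forall>b\<le>c. poly ((pderiv ^^ b) u) (real t) = 0"
  shows "Hp m c dvd u"
proof -
  have "\<forall>t\<in>{..m}. [:-real t,1:]^(Suc c) dvd u" using root_mult assms by blast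
  then show ?thesis unfolding Hp_def using dvd_prod_lin by blast
qed

lemma degree_Hp: "degree (Hp m c) = Suc m * Suc c"
proof -
  have "degree (Hp m c) = (\<Sum>t\<le>m. degree ([:-real t,1:]^(Suc c)))"
    unfolding Hp_def by (rule degree_prod_eq_sum_degree) (simp del: power_Suc)
  also have "\<dots> = Suc m * Suc c" by (simp only: degree_linear_power sum_constant card_atMost) simp
  finally show ?thesis .
qed

definition lam :: "real poly \<Rightarrow> nat \<Rightarrow> nat \<Rightarrow> real" where
  "lam H d e = coeff (monom 1 e mod H) d"

lemma mod_sum_poly: "(\<Sum>s\<in>S. f s) mod (H::real poly) = (\<Sum>s\<in>S. f s mod H)"
  by (induction S rule: infinite_finite_induct) (auto simp: poly_mod_add_left)

lemma lam_lin: "coeff ((\<Sum>s\<in>S. monom (w s) (E s)) mod H) d = (\<Sum>s\<in>S. w s * lam H d (E s))"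
proof -
  have "(\<Sum>s\<in>S. monom (w s) (E s)) mod H = (\<Sum>s\<in>S. smult (w s) (monom 1 (E s) mod H))"
    by (simp add: mod_sum_poly mod_smult_left[symmetric] smult_monom)
  then show ?thesis by (simp add: lam_def coeff_sum)
qed

lemma lam_small: "e < degree H \<Longrightarrow> lam H d e = (if d = e then 1 else 0)"
  by (simp add: lam_def mod_poly_less coeff_monom degree_monom_eq)


lemma tensor:
  fixes S :: "'a set" and I :: "nat set" and E :: "'a \<Rightarrow> nat \<Rightarrow> nat"
    and C d :: "nat \<Rightarrow> nat" and w :: "'a \<Rightarrow> real"
  assumes "finite S" "finite I"
    and "\<And>a \<beta>. (\<forall>i\<in>I. a i \<le> m \<and> \<beta> i \<le> C i) \<Longrightarrow>
           (\<Sum>s\<in>S. w s * (\<Prod>i\<in>I. wt (E s i) (\<beta> i) (real (a i)))) = 0"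
  shows "(\<Sum>s\<in>S. w s * (\<Prod>i\<in>I. lam (Hp m (C i)) (d i) (E s i))) = 0"
  using assms(2,3)
proof (induction I arbitrary: w rule: finite_induct)
  case empty
  from empty.prems[of "\<lambda>_. 0" "\<lambda>_. 0"] show ?case by simp
next
  case (insert j I)
  define w' where "w' s = w s * lam (Hp m (C j)) (d j) (E s j)" for s
  have "(\<Sum>s\<in>S. w' s * (\<Prod>i\<in>I. lam (Hp m (C i)) (d i) (E s i))) = 0"
  proof (rule insert.IH)
    fix a \<beta> :: "nat \<Rightarrow> nat"
    assume ab: "\<forall>i\<in>I. a i \<le> m \<and> \<beta> i \<le> C i"
    define c' where "c' s = w s * (\<Prod>i\<in>I. wt (E s i) (\<beta> i) (real (a i)))" for s
    define u where "u = (\<Sum>s\<in>S. monom (c' s) (E s j))"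
    have "\<forall>t\<le>m. \<forall>b\<le>C j. poly ((pderiv ^^ b) u) (real t) = 0"
    proof (intro allI impI)
      fix t b assume tb: "t \<le> m" "b \<le> C j"
      have "poly ((pderiv ^^ b) u) (real t) = (\<Sum>s\<in>S. c' s * wt (E s j) b (real t))"
        unfolding u_def by (rule poly_hpd_sum)
      also have "\<dots> = (\<Sum>s\<in>S. w s * (\<Prod>i\<in>insert j I. wt (E s i) ((\<beta>(j:=b)) i) (real ((a(j:=t)) i))))"
      proof (rule sum.cong[OF refl])
        fix s assume "s \<in> S"
        have "(\<Prod>i\<in>I. wt (E s i) ((\<beta>(j:=b)) i) (real ((a(j:=t)) i))) = (\<Prod>i\<in>I. wt (E s i) (\<beta> i) (real (a i)))"
          using insert.hyps by (intro prod.cong) auto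
        then show "c' s * wt (E s j) b (real t) = w s * (\<Prod>i\<in>insert j I. wt (E s i) ((\<beta>(j:=b)) i) (real ((a(j:=t)) i)))"
          using insert.hyps by (simp add: c'_def)
      qed
      also have "\<dots> = 0" using insert.prems ab tb by (intro insert.prems) auto
      finally show "poly ((pderiv ^^ b) u) (real t) = 0" .
    qed
    then have "Hp m (C j) dvd u" by (rule Hp_dvd)
    then have "u mod Hp m (C j) = 0" by simp
    then have "coeff (u mod Hp m (C j)) (d j) = 0" by simp
    then have "(\<Sum>s\<in>S. c' s * lam (Hp m (C j)) (d j) (E s j)) = 0"
      unfolding u_def lam_lin .
    then show "(\<Sum>s\<in>S. w' s * (\<Prod>i\<in>I. wt (E s i) (\<beta> i) (real (a i)))) = 0"
      by (simp add: c'_def w'_def mult_ac)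
  qed
  then show ?case using insert.hyps by (simp add: w'_def mult_ac)
qed


lemma pd_pow: "(pd i ^^ b) R \<alpha> = pochhammer (real (\<alpha> i) + 1) b * R (\<alpha>(i := \<alpha> i + b))"
proof (induction b arbitrary: \<alpha>)
  case 0 then show ?case by simp
next
  case (Suc b)
  have "(pd i ^^ Suc b) R \<alpha> = (real (\<alpha> i) + 1) * (pd i ^^ b) R (\<alpha>(i := Suc (\<alpha> i)))"
    by (simp add: pd_def)
  also have "\<dots> = (real (\<alpha> i) + 1) * (pochhammer (real (\<alpha> i) + 1 + 1) b * R (\<alpha>(i := \<alpha> i + Suc b)))"
    using Suc.IH[of "\<alpha>(i := Suc (\<alpha> i))"] by (simp del: fun_upd_apply add: fun_upd_upd) (simp add: add_ac)
  also have "\<dots> = pochhammer (real (\<alpha> i) + 1) (Suc b) * R (\<alpha>(i := \<alpha> i + Suc b))"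
    by (simp add: pochhammer_rec)
  finally show ?case .
qed

lemma hpd_foldr:
  "distinct xs \<Longrightarrow> foldr (\<lambda>i R. (pd i ^^ \<beta> i) R) xs Q \<alpha> =
     (\<Prod>i\<in>set xs. pochhammer (real (\<alpha> i) + 1) (\<beta> i)) * Q (\<lambda>i. if i \<in> set xs then \<alpha> i + \<beta> i else \<alpha> i)"
proof (induction xs arbitrary: \<alpha>)
  case Nil then show ?case by simp
next
  case (Cons x xs)
  have "foldr (\<lambda>i R. (pd i ^^ \<beta> i) R) (x # xs) Q \<alpha> =
        pochhammer (real (\<alpha> x) + 1) (\<beta> x) * foldr (\<lambda>i R. (pd i ^^ \<beta> i) R) xs Q (\<alpha>(x := \<alpha> x + \<beta> x))"
    by (simp add: pd_pow)
  also have "\<dots> = pochhammer (real (\<alpha> x) + 1) (\<beta> x) *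
      ((\<Prod>i\<in>set xs. pochhammer (real ((\<alpha>(x := \<alpha> x + \<beta> x)) i) + 1) (\<beta> i)) *
        Q (\<lambda>i. if i \<in> set xs then (\<alpha>(x := \<alpha> x + \<beta> x)) i + \<beta> i else (\<alpha>(x := \<alpha> x + \<beta> x)) i))"
    using Cons by simp
  also have "(\<Prod>i\<in>set xs. pochhammer (real ((\<alpha>(x := \<alpha> x + \<beta> x)) i) + 1) (\<beta> i)) =
             (\<Prod>i\<in>set xs. pochhammer (real (\<alpha> i) + 1) (\<beta> i))"
    using Cons.prems by (intro prod.cong) auto
  also have "(\<lambda>i. if i \<in> set xs then (\<alpha>(x := \<alpha> x + \<beta> x)) i + \<beta> i else (\<alpha>(x := \<alpha> x + \<beta> x)) i)
      = (\<lambda>i. if i \<in> set (x # xs) then \<alpha> i + \<beta> i else \<alpha> i)"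
    using Cons.prems by (auto simp: fun_eq_iff)
  finally show ?case using Cons.prems by (simp add: mult_ac)
qed

lemma hpd_eq:
  assumes "\<forall>i\<ge>n. \<beta> i = 0"
  shows "hpd n \<beta> Q \<alpha> = (\<Prod>i<n. pochhammer (real (\<alpha> i) + 1) (\<beta> i)) * Q (\<lambda>i. \<alpha> i + \<beta> i)"
proof -
  have "(\<lambda>i. if i \<in> set [0..<n] then \<alpha> i + \<beta> i else \<alpha> i) = (\<lambda>i. \<alpha> i + \<beta> i)"
    using assms by (auto simp: fun_eq_iff)
  moreover have "set [0..<n] = {..<n}" by auto
  ultimately show ?thesis unfolding hpd_def using hpd_foldr[of "[0..<n]" \<beta> Q \<alpha>] by simp
qed

lemma meval_hpd:
  fixes Q :: mpoly
  assumes fin: "finite S" and sub: "{\<mu>. Q \<mu> \<noteq> 0} \<subseteq> S" and bz: "\<forall>i\<ge>n. \<beta> i = 0"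
  shows "meval n (hpd n \<beta> Q) a = (\<Sum>\<mu>\<in>S. Q \<mu> * (\<Prod>i<n. wt (\<mu> i) (\<beta> i) (a i)))"
proof -
  define S' where "S' = S \<inter> {\<mu>. \<forall>i. \<beta> i \<le> \<mu> i}"
  define sb where "sb \<mu> = (\<lambda>i. \<mu> i - \<beta> i)" for \<mu> :: "nat \<Rightarrow> nat"
  define T where "T = sb ` S'"
  have finT: "finite T" using fin by (simp add: T_def S'_def)
  have sbinv: "(\<lambda>i. sb \<mu> i + \<beta> i) = \<mu>" if "\<mu> \<in> S'" for \<mu>
    using that by (auto simp: sb_def S'_def fun_eq_iff)
  have supp: "{\<alpha>. hpd n \<beta> Q \<alpha> \<noteq> 0} \<subseteq> T"
  proof
    fix \<alpha> assume "\<alpha> \<in> {\<alpha>. hpd n \<beta> Q \<alpha> \<noteq> 0}"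
    then have "Q (\<lambda>i. \<alpha> i + \<beta> i) \<noteq> 0" by (auto simp: hpd_eq[OF bz])
    then have "(\<lambda>i. \<alpha> i + \<beta> i) \<in> S'" using sub by (auto simp: S'_def)
    moreover have "\<alpha> = sb (\<lambda>i. \<alpha> i + \<beta> i)" by (simp add: sb_def)
    ultimately show "\<alpha> \<in> T" by (auto simp: T_def)
  qed
  have "meval n (hpd n \<beta> Q) a = (\<Sum>\<alpha>\<in>T. hpd n \<beta> Q \<alpha> * (\<Prod>i<n. a i ^ \<alpha> i))"
    unfolding meval_def by (rule sum.mono_neutral_left[OF finT supp]) auto
  also have "\<dots> = (\<Sum>\<mu>\<in>S'. hpd n \<beta> Q (sb \<mu>) * (\<Prod>i<n. a i ^ sb \<mu> i))"
    unfolding T_def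
  proof (rule sum.reindex_cong[OF _ refl refl])
    show "inj_on sb S'"
    proof
      fix x y assume "x \<in> S'" "y \<in> S'" "sb x = sb y"
      then show "x = y" using sbinv by metis
    qed
  qed
  also have "\<dots> = (\<Sum>\<mu>\<in>S'. Q \<mu> * (\<Prod>i<n. wt (\<mu> i) (\<beta> i) (a i)))"
  proof (rule sum.cong[OF refl])
    fix \<mu> assume mu: "\<mu> \<in> S'"
    have "hpd n \<beta> Q (sb \<mu>) = (\<Prod>i<n. pochhammer (real (sb \<mu> i) + 1) (\<beta> i)) * Q \<mu>"
      using hpd_eq[OF bz] sbinv[OF mu] by simp
    moreover have "(\<Prod>i<n. wt (\<mu> i) (\<beta> i) (a i)) =
       (\<Prod>i<n. pochhammer (real (sb \<mu> i) + 1) (\<beta> i)) * (\<Prod>i<n. a i ^ sb \<mu> i)"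
      using mu by (simp add: wt_def sb_def S'_def prod.distrib[symmetric])
    ultimately show "hpd n \<beta> Q (sb \<mu>) * (\<Prod>i<n. a i ^ sb \<mu> i) = Q \<mu> * (\<Prod>i<n. wt (\<mu> i) (\<beta> i) (a i))"
      by (simp add: mult_ac)
  qed
  also have "\<dots> = (\<Sum>\<mu>\<in>S. Q \<mu> * (\<Prod>i<n. wt (\<mu> i) (\<beta> i) (a i)))"
  proof (rule sum.mono_neutral_left[OF fin])
    show "S' \<subseteq> S" by (auto simp: S'_def)
    show "\<forall>\<mu>\<in>S - S'. Q \<mu> * (\<Prod>i<n. wt (\<mu> i) (\<beta> i) (a i)) = 0"
    proof
      fix \<mu> assume "\<mu> \<in> S - S'"
      then obtain i where i: "\<mu> i < \<beta> i" by (auto simp: S'_def not_le)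
      then have "i < n" using bz by (metis not_less0 not_le)
      then have "wt (\<mu> i) (\<beta> i) (a i) = 0" using i by (simp add: wt_def)
      then show "Q \<mu> * (\<Prod>i<n. wt (\<mu> i) (\<beta> i) (a i)) = 0" using \<open>i < n\<close> by auto
    qed
  qed
  finally show ?thesis .
qed


lemma mmul_eq:
  assumes "finite {\<beta>. A \<beta> \<noteq> 0}"
  shows "mmul A R \<mu> = (\<Sum>\<beta>\<in>{\<beta>. A \<beta> \<noteq> 0}. if (\<forall>i. \<beta> i \<le> \<mu> i) then A \<beta> * R (\<lambda>i. \<mu> i - \<beta> i) else 0)"
  unfolding mmul_def
proof (rule sum.cong[OF refl])
  fix \<beta>
  have "{\<gamma>. R \<gamma> \<noteq> 0 \<and> (\<lambda>i. \<beta> i + \<gamma> i) = \<mu>} =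
        (if (\<forall>i. \<beta> i \<le> \<mu> i) \<and> R (\<lambda>i. \<mu> i - \<beta> i) \<noteq> 0 then {\<lambda>i. \<mu> i - \<beta> i} else {})"
  proof (cases "(\<forall>i. \<beta> i \<le> \<mu> i) \<and> R (\<lambda>i. \<mu> i - \<beta> i) \<noteq> 0")
    case True
    then show ?thesis by (auto simp: fun_eq_iff) (metis add_diff_cancel_left')
  next
    case False
    { fix \<gamma> assume "R \<gamma> \<noteq> 0" "(\<lambda>i. \<beta> i + \<gamma> i) = \<mu>"
      then have "(\<forall>i. \<beta> i \<le> \<mu> i) \<and> \<gamma> = (\<lambda>i. \<mu> i - \<beta> i)" by (auto simp: fun_eq_iff) (metis le_add1, metis add_diff_cancel_left')
      with False \<open>R \<gamma> \<noteq> 0\<close> have False by auto }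
    then show ?thesis using False by auto
  qed
  then show "(\<Sum>\<gamma>\<in>{\<gamma>. R \<gamma> \<noteq> 0 \<and> (\<lambda>i. \<beta> i + \<gamma> i) = \<mu>}. A \<beta> * R \<gamma>) =
     (if (\<forall>i. \<beta> i \<le> \<mu> i) then A \<beta> * R (\<lambda>i. \<mu> i - \<beta> i) else 0)"
    by auto
qed

lemma finite_var_poly: "finite {\<beta>. var_poly x g \<beta> \<noteq> 0}"
proof -
  have "{\<beta>. var_poly x g \<beta> \<noteq> 0} \<subseteq> (\<lambda>e. (\<lambda>i. if i = x then e else 0)) ` {..degree g}"
  proof
    fix \<beta> assume "\<beta> \<in> {\<beta>. var_poly x g \<beta> \<noteq> 0}"
    then have h: "\<forall>j. j \<noteq> x \<longrightarrow> \<beta> j = 0" "coeff g (\<beta> x) \<noteq> 0"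
      by (auto simp: var_poly_def split: if_splits)
    then have "\<beta> x \<le> degree g" using le_degree by blast
    moreover have "\<beta> = (\<lambda>i. if i = x then \<beta> x else 0)" using h by (auto simp: fun_eq_iff)
    ultimately show "\<beta> \<in> (\<lambda>e. (\<lambda>i. if i = x then e else 0)) ` {..degree g}" by blast
  qed
  then show ?thesis by (rule finite_subset) simp
qed

lemma prodvars_foldr:
  "distinct xs \<Longrightarrow> foldr (\<lambda>i acc. mmul (var_poly i g) acc) xs mone \<mu> =
     (if \<forall>i. i \<notin> set xs \<longrightarrow> \<mu> i = 0 then \<Prod>i\<in>set xs. coeff g (\<mu> i) else 0)"
proof (induction xs arbitrary: \<mu>)
  case Nil
  then show ?case by (auto simp: mone_def fun_eq_iff)
next
  case (Cons x xs)
  define R where "R = foldr (\<lambda>i acc. mmul (var_poly i g) acc) xs mone"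
  have IH: "R \<nu> = (if \<forall>i. i \<notin> set xs \<longrightarrow> \<nu> i = 0 then \<Prod>i\<in>set xs. coeff g (\<nu> i) else 0)" for \<nu>
    using Cons by (simp add: R_def)
  define \<beta>0 where "\<beta>0 = (\<lambda>i. if i = x then \<mu> x else (0::nat))"
  have "mmul (var_poly x g) R \<mu> =
     (\<Sum>\<beta>\<in>{\<beta>. var_poly x g \<beta> \<noteq> 0}. if \<beta> = \<beta>0 then var_poly x g \<beta>0 * R (\<lambda>i. \<mu> i - \<beta>0 i) else 0)"
    unfolding mmul_eq[OF finite_var_poly]
  proof (rule sum.cong[OF refl])
    fix \<beta> assume b: "\<beta> \<in> {\<beta>. var_poly x g \<beta> \<noteq> 0}"
    then have bz: "\<forall>j. j \<noteq> x \<longrightarrow> \<beta> j = 0" by (auto simp: var_poly_def split: if_splits)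
    show "(if \<forall>i. \<beta> i \<le> \<mu> i then var_poly x g \<beta> * R (\<lambda>i. \<mu> i - \<beta> i) else 0) =
          (if \<beta> = \<beta>0 then var_poly x g \<beta>0 * R (\<lambda>i. \<mu> i - \<beta>0 i) else 0)"
    proof (cases "\<beta> = \<beta>0")
      case True
      then show ?thesis by (auto simp: \<beta>0_def)
    next
      case False
      then have "\<beta> x \<noteq> \<mu> x" using bz by (auto simp: \<beta>0_def fun_eq_iff split: if_split_asm)
      have "R (\<lambda>i. \<mu> i - \<beta> i) = 0" if "\<forall>i. \<beta> i \<le> \<mu> i"
      proof -
        have "\<mu> x - \<beta> x \<noteq> 0" using that \<open>\<beta> x \<noteq> \<mu> x\<close> by (metis diff_is_0_eq le_antisym)
        moreover have "x \<notin> set xs" using Cons.prems by simp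
        ultimately show ?thesis using IH by auto
      qed
      then show ?thesis using False by auto
    qed
  qed
  also have "\<dots> = (if \<beta>0 \<in> {\<beta>. var_poly x g \<beta> \<noteq> 0} then var_poly x g \<beta>0 * R (\<lambda>i. \<mu> i - \<beta>0 i) else 0)"
    using finite_var_poly by (simp add: sum.delta')
  also have "\<dots> = var_poly x g \<beta>0 * R (\<lambda>i. \<mu> i - \<beta>0 i)" by auto
  also have "\<dots> = (if \<forall>i. i \<notin> set (x # xs) \<longrightarrow> \<mu> i = 0 then \<Prod>i\<in>set (x # xs). coeff g (\<mu> i) else 0)"
  proof -
    have vp: "var_poly x g \<beta>0 = coeff g (\<mu> x)" by (simp add: var_poly_def \<beta>0_def)
    have xn: "x \<notin> set xs" using Cons.prems by simp
    have "R (\<lambda>i. \<mu> i - \<beta>0 i) = (if \<forall>i. i \<notin> set (x # xs) \<longrightarrow> \<mu> i = 0 then \<Prod>i\<in>set xs. coeff g (\<mu> i) else 0)"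
    proof -
      have e1: "(\<forall>i. i \<notin> set xs \<longrightarrow> \<mu> i - \<beta>0 i = 0) = (\<forall>i. i \<notin> set (x # xs) \<longrightarrow> \<mu> i = 0)"
        using xn by (auto simp: \<beta>0_def)
      have e2: "(\<Prod>i\<in>set xs. coeff g (\<mu> i - \<beta>0 i)) = (\<Prod>i\<in>set xs. coeff g (\<mu> i))"
        using xn by (intro prod.cong) (auto simp: \<beta>0_def)
      have "R (\<lambda>i. \<mu> i - \<beta>0 i) = (if \<forall>i. i \<notin> set xs \<longrightarrow> \<mu> i - \<beta>0 i = 0 then \<Prod>i\<in>set xs. coeff g (\<mu> i - \<beta>0 i) else 0)"
        by (rule IH)
      then show ?thesis unfolding e1 e2 .
    qed
    then show ?thesis
      by (cases "\<forall>i. i \<notin> set (x # xs) \<longrightarrow> \<mu> i = 0") (simp_all add: vp xn, force)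
  qed
  finally show ?case by (simp add: R_def)
qed

lemma prod_vars_eq:
  "prod_vars n g \<mu> = (if \<forall>i\<ge>n. \<mu> i = 0 then \<Prod>i<n. coeff g (\<mu> i) else 0)"
proof -
  have e: "(\<forall>i. i \<notin> {..<n} \<longrightarrow> \<mu> i = 0) = (\<forall>i\<ge>n. \<mu> i = 0)" by auto
  show ?thesis unfolding prod_vars_def
    by (simp only: prodvars_foldr[OF distinct_upt] set_upt atLeast0LessThan e)
qed

definition Box :: "nat \<Rightarrow> nat \<Rightarrow> (nat \<Rightarrow> nat) set" where
  "Box n N = {f. \<forall>x. (x \<in> {..<n} \<longrightarrow> f x \<in> {..N}) \<and> (x \<notin> {..<n} \<longrightarrow> f x = 0)}"

lemma finite_Box: "finite (Box n N)"
  unfolding Box_def by (rule finite_set_of_finite_funs) auto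

lemma box_sum:
  fixes \<phi> :: "nat \<Rightarrow> nat \<Rightarrow> real"
  shows "(\<Sum>\<mu>\<in>Box n N. \<Prod>i<n. \<phi> i (\<mu> i)) = (\<Prod>i<n. \<Sum>e\<le>N. \<phi> i e)"
proof (induction n)
  case 0
  have "Box 0 N = {\<lambda>_. 0}" by (auto simp: Box_def)
  then show ?case by simp
next
  case (Suc n)
  define F where "F = (\<lambda>(\<mu>::nat\<Rightarrow>nat, e::nat). \<mu>(n := e))"
  have img: "Box (Suc n) N = F ` (Box n N \<times> {..N})"
  proof
    show "F ` (Box n N \<times> {..N}) \<subseteq> Box (Suc n) N" by (auto simp: F_def Box_def)
    show "Box (Suc n) N \<subseteq> F ` (Box n N \<times> {..N})"
    proof
      fix \<mu> assume m: "\<mu> \<in> Box (Suc n) N"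
      have "\<mu>(n := 0) \<in> Box n N" using m by (auto simp: Box_def)
      moreover have "\<mu> n \<le> N" using m by (auto simp: Box_def)
      moreover have "\<mu> = F (\<mu>(n := 0), \<mu> n)" by (simp add: F_def)
      ultimately show "\<mu> \<in> F ` (Box n N \<times> {..N})" by blast
    qed
  qed
  have inj: "inj_on F (Box n N \<times> {..N})"
  proof (rule inj_onI, clarify)
    fix \<mu> e \<nu> e' assume a: "\<mu> \<in> Box n N" "\<nu> \<in> Box n N" "F (\<mu>, e) = F (\<nu>, e')"
    have "\<mu> n = 0" "\<nu> n = 0" using a by (auto simp: Box_def)
    have eq: "\<mu>(n := e) = \<nu>(n := e')" using a(3) by (simp add: F_def)
    have "e = e'" using fun_cong[OF eq, of n] by simp
    moreover have "\<mu> i = \<nu> i" for i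
    proof (cases "i = n")
      case True then show ?thesis using \<open>\<mu> n = 0\<close> \<open>\<nu> n = 0\<close> by simp
    next
      case False then show ?thesis using fun_cong[OF eq, of i] by simp
    qed
    ultimately show "\<mu> = \<nu> \<and> e = e'" by auto
  qed
  have "(\<Sum>\<mu>\<in>Box (Suc n) N. \<Prod>i<Suc n. \<phi> i (\<mu> i)) =
        (\<Sum>p\<in>Box n N \<times> {..N}. \<Prod>i<Suc n. \<phi> i (F p i))"
    unfolding img by (rule sum.reindex[OF inj, unfolded comp_def])
  also have "\<dots> = (\<Sum>p\<in>Box n N \<times> {..N}. (\<lambda>(\<mu>,e). (\<Prod>i<n. \<phi> i (\<mu> i)) * \<phi> n e) p)"
  proof (rule sum.cong[OF refl], clarify)
    fix \<mu> e
    have "(\<Prod>i<n. \<phi> i (F (\<mu>, e) i)) = (\<Prod>i<n. \<phi> i (\<mu> i))"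
      by (rule prod.cong) (auto simp: F_def)
    then show "(\<Prod>i<Suc n. \<phi> i (F (\<mu>, e) i)) = (\<Prod>i<n. \<phi> i (\<mu> i)) * \<phi> n e"
      by (simp add: F_def)
  qed
  also have "\<dots> = (\<Sum>\<mu>\<in>Box n N. \<Sum>e\<le>N. (\<Prod>i<n. \<phi> i (\<mu> i)) * \<phi> n e)"
    by (rule sum.cartesian_product[symmetric])
  also have "\<dots> = (\<Sum>\<mu>\<in>Box n N. \<Prod>i<n. \<phi> i (\<mu> i)) * (\<Sum>e\<le>N. \<phi> n e)"
    by (rule sum_product[symmetric])
  finally show ?case using Suc by simp
qed


lemma dvd_pderiv_lin:
  fixes u :: "real poly"
  assumes "[:-t,1:]^(Suc C) dvd u"
  shows "[:-t,1:]^C dvd pderiv u"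
proof -
  obtain q where q: "u = [:-t,1:]^(Suc C) * q" using assms by (elim dvdE)
  have "pderiv u = [:- t, 1:] ^ Suc C * pderiv q + smult (of_nat (Suc C)) (q * [:- t, 1:] ^ C)"
    unfolding q by (rule lemma_order_pderiv1)
  moreover have "[:-t,1:]^C dvd [:- t, 1:] ^ Suc C * pderiv q"
    by (metis dvd_mult2 dvd_triv_left power_Suc2)
  moreover have "[:-t,1:]^C dvd smult (of_nat (Suc C)) (q * [:- t, 1:] ^ C)"
    by (simp add: dvd_smult)
  ultimately show ?thesis by (simp add: dvd_add)
qed

lemma dvd_imp_hpd_zero:
  fixes u :: "real poly"
  shows "[:-t,1:]^(Suc C) dvd u \<Longrightarrow> b \<le> C \<Longrightarrow> poly ((pderiv ^^ b) u) t = 0"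
proof (induction C arbitrary: u b)
  case 0
  then have "[:-t,1:] dvd u" by simp
  then show ?case using 0 by (simp add: poly_eq_0_iff_dvd)
next
  case (Suc C)
  show ?case
  proof (cases b)
    case 0
    have "[:-t,1:] dvd u" using Suc.prems(1) by (meson dvd_power dvd_trans zero_less_Suc)
    then show ?thesis using 0 by (simp add: poly_eq_0_iff_dvd)
  next
    case (Suc b')
    have "(pderiv ^^ b) u = (pderiv ^^ b') (pderiv u)"
      using Suc by (simp only: funpow_Suc_right comp_def)
    moreover have "poly ((pderiv ^^ b') (pderiv u)) t = 0"
      using Suc.IH[OF dvd_pderiv_lin[OF Suc.prems(1)]] Suc.prems(2) Suc by simp
    ultimately show ?thesis by simp
  qed
qed

lemma supp_P_Box:
  "{\<mu>. prod_vars n G \<mu> \<noteq> 0} \<subseteq> Box n (degree G)"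
proof
  fix \<mu> assume "\<mu> \<in> {\<mu>. prod_vars n G \<mu> \<noteq> 0}"
  then have h: "\<forall>i\<ge>n. \<mu> i = 0" "(\<Prod>i<n. coeff G (\<mu> i)) \<noteq> 0"
    by (auto simp: prod_vars_eq split: if_splits)
  have "\<mu> i \<le> degree G" if "i < n" for i
    using h(2) that le_degree by (auto simp: prod_zero_iff)
  then show "\<mu> \<in> Box n (degree G)" using h(1) by (auto simp: Box_def not_less)
qed

lemma P_jet_zero:
  assumes "finite U" "{\<mu>. prod_vars n (shifted_ffact m ^ k) \<mu> \<noteq> 0} \<subseteq> U"
    and "j < n" "1 \<le> a j" "a j \<le> m" "\<beta> j < k"
  shows "(\<Sum>\<mu>\<in>U. prod_vars n (shifted_ffact m ^ k) \<mu> * (\<Prod>i<n. wt (\<mu> i) (\<beta> i) (real (a i)))) = 0"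
proof -
  define G where "G = shifted_ffact m ^ k"
  define N where "N = degree G"
  define SP where "SP = {\<mu>. prod_vars n G \<mu> \<noteq> 0}"
  define f where "f \<mu> = prod_vars n G \<mu> * (\<Prod>i<n. wt (\<mu> i) (\<beta> i) (real (a i)))" for \<mu>
  have sub1: "SP \<subseteq> U" using assms(2) by (simp add: SP_def G_def)
  have sub2: "SP \<subseteq> Box n N" using supp_P_Box by (simp add: SP_def N_def)
  have "sum f U = sum f SP"
    by (rule sum.mono_neutral_right[OF assms(1) sub1]) (auto simp: f_def SP_def)
  also have "\<dots> = sum f (Box n N)"
    by (rule sum.mono_neutral_left[OF finite_Box sub2]) (auto simp: f_def SP_def)
  also have "\<dots> = (\<Sum>\<mu>\<in>Box n N. \<Prod>i<n. coeff G (\<mu> i) * wt (\<mu> i) (\<beta> i) (real (a i)))"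
  proof (rule sum.cong[OF refl])
    fix \<mu> assume "\<mu> \<in> Box n N"
    then have "\<forall>i\<ge>n. \<mu> i = 0" by (auto simp: Box_def)
    then show "f \<mu> = (\<Prod>i<n. coeff G (\<mu> i) * wt (\<mu> i) (\<beta> i) (real (a i)))"
      by (simp add: f_def prod_vars_eq prod.distrib)
  qed
  also have "\<dots> = (\<Prod>i<n. \<Sum>e\<le>N. coeff G e * wt e (\<beta> i) (real (a i)))"
    by (rule box_sum)
  also have "\<dots> = (\<Prod>i<n. poly ((pderiv ^^ \<beta> i) G) (real (a i)))"
  proof (rule prod.cong[OF refl])
    fix i
    have "poly ((pderiv ^^ \<beta> i) (\<Sum>e\<le>N. monom (coeff G e) e)) (real (a i)) =
          (\<Sum>e\<le>N. coeff G e * wt e (\<beta> i) (real (a i)))"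
      by (rule poly_hpd_sum)
    then show "(\<Sum>e\<le>N. coeff G e * wt e (\<beta> i) (real (a i))) = poly ((pderiv ^^ \<beta> i) G) (real (a i))"
      by (simp add: N_def poly_as_sum_of_monoms)
  qed
  also have "\<dots> = 0"
  proof -
    have "[:- of_nat (a j), 1:] dvd shifted_ffact m"
      unfolding shifted_ffact_def using assms(4,5) by (intro dvd_prodI) auto
    then have "[:- real (a j), 1:] ^ k dvd G" unfolding G_def by (simp add: dvd_power_same)
    moreover have "k = Suc (k - 1)" using assms(6) by simp
    ultimately have "[:- real (a j), 1:] ^ Suc (k - 1) dvd G" by metis
    then have "poly ((pderiv ^^ \<beta> j) G) (real (a j)) = 0"
      by (rule dvd_imp_hpd_zero) (use assms(6) in simp)
    then show ?thesis using assms(3) by (auto intro: prod_zero)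
  qed
  finally show ?thesis by (simp add: f_def G_def)
qed

lemma sub_sum:
  fixes n k :: nat
  shows "k \<le> (\<Sum>i<n. c i) \<Longrightarrow> \<exists>c'. (\<Sum>i<n. c' i) = k \<and> (\<forall>i<n. c' i \<le> (c i::nat))"
proof (induction n arbitrary: k)
  case 0 then show ?case by auto
next
  case (Suc n)
  show ?case
  proof (cases "k \<le> (\<Sum>i<n. c i)")
    case True
    then obtain c' where c': "(\<Sum>i<n. c' i) = k" "\<forall>i<n. c' i \<le> c i" using Suc.IH by blast
    define c'' where "c'' = c'(n := 0)"
    have "(\<Sum>i<n. c'' i) = (\<Sum>i<n. c' i)" by (rule sum.cong) (auto simp: c''_def)
    then have "(\<Sum>i<Suc n. c'' i) = k" using c' by (simp add: c''_def)
    moreover have "\<forall>i<Suc n. c'' i \<le> c i" using c' by (auto simp: c''_def less_Suc_eq)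
    ultimately show ?thesis by blast
  next
    case False
    define c'' where "c'' = c(n := k - (\<Sum>i<n. c i))"
    have "(\<Sum>i<n. c'' i) = (\<Sum>i<n. c i)" by (rule sum.cong) (auto simp: c''_def)
    then have "(\<Sum>i<Suc n. c'' i) = k" using False by (simp add: c''_def)
    moreover have "\<forall>i<Suc n. c'' i \<le> c i" using Suc.prems by (auto simp: c''_def less_Suc_eq)
    ultimately show ?thesis by blast
  qed
qed

lemma sumE:
  fixes j n :: nat and s :: "nat \<Rightarrow> nat"
  assumes "j < n"
  shows "(\<Sum>i<n. (s(j := Suc (s j))) i) = Suc (\<Sum>i<n. s i)"
proof -
  have jn: "j \<in> {..<n}" using assms by simp
  have "(\<Sum>i<n. (s(j := Suc (s j))) i) = (s(j := Suc (s j))) j + (\<Sum>i\<in>{..<n}-{j}. (s(j := Suc (s j))) i)"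
    by (rule sum.remove[OF finite_lessThan jn])
  also have "(\<Sum>i\<in>{..<n}-{j}. (s(j := Suc (s j))) i) = (\<Sum>i\<in>{..<n}-{j}. s i)"
    by (rule sum.cong) auto
  also have "(\<Sum>i<n. s i) = s j + (\<Sum>i\<in>{..<n}-{j}. s i)"
    by (rule sum.remove[OF finite_lessThan jn])
  ultimately show ?thesis by simp
qed


lemma key:
  fixes n m k :: nat and P0 :: mpoly
  assumes m1: "m \<ge> 1" and k2: "k \<ge> 2"
    and red: "reduced n m k P0"
    and hyp: "\<And>a::nat \<Rightarrow> nat. (\<forall>i<n. a i \<le> m) \<Longrightarrow> (\<exists>i<n. a i \<noteq> 0) \<Longrightarrow>
           zero_mult_ge n (mminus (prod_vars n (shifted_ffact m ^ k)) P0) (\<lambda>i. real (a i)) k"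
    and P0a: "P0 \<alpha> \<noteq> 0" and degA: "mdeg n \<alpha> = m * n + (m + 1) * (k - 1) - 1" and jn: "j < n"
  shows "m \<le> \<alpha> j"
proof (rule ccontr)
  assume "\<not> m \<le> \<alpha> j"
  then have aj: "\<alpha> j < m" by simp
  define S where "S = {\<mu>. P0 \<mu> \<noteq> 0}"
  define P where "P = prod_vars n (shifted_ffact m ^ k)"
  have finS: "finite S" using red by (simp add: reduced_def is_mpoly_def S_def)
  have zS: "\<forall>\<mu>\<in>S. \<forall>i\<ge>n. \<mu> i = 0" using red by (simp add: reduced_def is_mpoly_def S_def)
  have degS: "\<forall>\<mu>\<in>S. mdeg n \<mu> \<le> m * n + (m + 1) * (k - 1) - 1" using red by (simp add: reduced_def S_def)
  have nodiv: "\<not> (\<exists>c::nat \<Rightarrow> nat. (\<Sum>i<n. c i) = k \<and> (\<forall>i<n. (m + 1) * c i \<le> \<alpha> i))"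
    using red P0a by (simp add: reduced_def)
  have aS: "\<alpha> \<in> S" using P0a by (simp add: S_def)
  define E where "E s = s(j := Suc (s j))" for s :: "nat \<Rightarrow> nat"
  define \<delta> where "\<delta> = E \<alpha>"
  define C where "C i = \<alpha> i div Suc m" for i
  have Cj: "C j = 0" using aj by (simp add: C_def)
  have sumC: "(\<Sum>i<n. C i) \<le> k - 1"
  proof (rule ccontr)
    assume "\<not> (\<Sum>i<n. C i) \<le> k - 1"
    then have "k \<le> (\<Sum>i<n. C i)" by simp
    then obtain c' where c': "(\<Sum>i<n. c' i) = k" "\<forall>i<n. c' i \<le> C i" using sub_sum by blast
    have "\<forall>i<n. (m + 1) * c' i \<le> \<alpha> i"
    proof (intro allI impI)
      fix i assume "i < n"
      then have "(m + 1) * c' i \<le> (m + 1) * C i" using c' by (intro mult_le_mono2) simp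
      also have "\<dots> \<le> \<alpha> i" unfolding C_def by (metis Suc_eq_plus1 div_times_less_eq_dividend mult.commute)
      finally show "(m + 1) * c' i \<le> \<alpha> i" .
    qed
    then show False using nodiv c' by blast
  qed
  have degH: "\<delta> i < Suc m * Suc (C i)" for i
  proof (cases "i = j")
    case True
    then show ?thesis using aj by (simp add: \<delta>_def E_def)
  next
    case False
    have "\<alpha> i = Suc m * (\<alpha> i div Suc m) + \<alpha> i mod Suc m" by (metis mult_div_mod_eq)
    moreover have "\<alpha> i mod Suc m < Suc m" by simp
    moreover have "Suc m * Suc (\<alpha> i div Suc m) = Suc m * (\<alpha> i div Suc m) + Suc m" by simp
    ultimately have "\<alpha> i < Suc m * Suc (\<alpha> i div Suc m)" by linarith
    then show ?thesis using False by (simp add: \<delta>_def E_def C_def)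
  qed
  have T: "(\<Sum>s\<in>S. P0 s * (\<Prod>i\<in>{..<n}. lam (Hp m (C i)) (\<delta> i) (E s i))) = 0"
  proof (rule tensor[OF finS finite_lessThan])
    fix a \<beta> :: "nat \<Rightarrow> nat"
    assume ab: "\<forall>i\<in>{..<n}. a i \<le> m \<and> \<beta> i \<le> C i"
    have bj: "\<beta> j = 0" using ab jn Cj by (metis le_zero_eq lessThan_iff)
    have fac: "(\<Prod>i\<in>{..<n}. wt (E s i) (\<beta> i) (real (a i))) = real (a j) * (\<Prod>i<n. wt (s i) (\<beta> i) (real (a i)))" for s
    proof -
      have jn': "j \<in> {..<n}" using jn by simp
      have "(\<Prod>i\<in>{..<n}. wt (E s i) (\<beta> i) (real (a i))) =
            wt (E s j) (\<beta> j) (real (a j)) * (\<Prod>i\<in>{..<n}-{j}. wt (E s i) (\<beta> i) (real (a i)))"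
        by (rule prod.remove[OF finite_lessThan jn'])
      also have "(\<Prod>i\<in>{..<n}-{j}. wt (E s i) (\<beta> i) (real (a i))) = (\<Prod>i\<in>{..<n}-{j}. wt (s i) (\<beta> i) (real (a i)))"
        by (rule prod.cong) (auto simp: E_def)
      also have "wt (E s j) (\<beta> j) (real (a j)) = real (a j) * wt (s j) (\<beta> j) (real (a j))"
        using bj by (simp add: E_def wt_def)
      also have "(\<Prod>i<n. wt (s i) (\<beta> i) (real (a i))) = wt (s j) (\<beta> j) (real (a j)) * (\<Prod>i\<in>{..<n}-{j}. wt (s i) (\<beta> i) (real (a i)))"
        by (rule prod.remove[OF finite_lessThan jn'])
      ultimately show ?thesis by (simp add: mult_ac)
    qed
    have "(\<Sum>s\<in>S. P0 s * (\<Prod>i\<in>{..<n}. wt (E s i) (\<beta> i) (real (a i)))) =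
          real (a j) * (\<Sum>s\<in>S. P0 s * (\<Prod>i<n. wt (s i) (\<beta> i) (real (a i))))"
      by (simp add: fac sum_distrib_left mult_ac)
    also have "\<dots> = 0"
    proof (cases "a j = 0")
      case True then show ?thesis by simp
    next
      case False
      define \<beta>' where "\<beta>' i = (if i < n then \<beta> i else 0)" for i
      have bz: "\<forall>i\<ge>n. \<beta>' i = 0" by (simp add: \<beta>'_def)
      have "mdeg n \<beta>' = (\<Sum>i<n. \<beta> i)" unfolding mdeg_def by (rule sum.cong) (auto simp: \<beta>'_def)
      also have "\<dots> \<le> (\<Sum>i<n. C i)" using ab by (intro sum_mono) auto
      finally have mdb: "mdeg n \<beta>' < k" using sumC k2 by linarith
      have am: "\<forall>i<n. a i \<le> m" using ab by auto
      have ane: "\<exists>i<n. a i \<noteq> 0" using False jn by blast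
      have zm: "meval n (hpd n \<beta>' (mminus P P0)) (\<lambda>i. real (a i)) = 0"
        using hyp[OF am ane] bz mdb unfolding zero_mult_ge_def P_def by blast
      define U where "U = S \<union> {\<mu>. P \<mu> \<noteq> 0}"
      have finU: "finite U" unfolding U_def using finS
        by (metis (no_types) finite_Box finite_UnI finite_subset supp_P_Box P_def)
      have supQ: "{\<mu>. mminus P P0 \<mu> \<noteq> 0} \<subseteq> U" by (auto simp: U_def S_def mminus_def)
      define W where "W \<mu> = (\<Prod>i<n. wt (\<mu> i) (\<beta>' i) (real (a i)))" for \<mu>
      have "0 = (\<Sum>\<mu>\<in>U. mminus P P0 \<mu> * W \<mu>)"
        using zm meval_hpd[OF finU supQ bz] by (simp add: W_def)
      also have "\<dots> = (\<Sum>\<mu>\<in>U. P \<mu> * W \<mu>) - (\<Sum>\<mu>\<in>U. P0 \<mu> * W \<mu>)"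
        by (simp add: mminus_def left_diff_distrib sum_subtractf)
      also have "(\<Sum>\<mu>\<in>U. P \<mu> * W \<mu>) = 0"
        unfolding W_def P_def
        by (rule P_jet_zero[OF finU]) (use jn False am k2 in \<open>auto simp: U_def P_def \<beta>'_def bj\<close>)
      also have "(\<Sum>\<mu>\<in>U. P0 \<mu> * W \<mu>) = (\<Sum>\<mu>\<in>S. P0 \<mu> * W \<mu>)"
        by (rule sum.mono_neutral_right[OF finU]) (auto simp: U_def S_def)
      also have "(\<Sum>\<mu>\<in>S. P0 \<mu> * W \<mu>) = (\<Sum>s\<in>S. P0 s * (\<Prod>i<n. wt (s i) (\<beta> i) (real (a i))))"
        unfolding W_def by (intro sum.cong refl arg_cong2[where f = "(*)"] prod.cong) (auto simp: \<beta>'_def)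
      finally show ?thesis by simp
    qed
    finally show "(\<Sum>s\<in>S. P0 s * (\<Prod>i\<in>{..<n}. wt (E s i) (\<beta> i) (real (a i)))) = 0" .
  qed
  have other: "(\<Prod>i\<in>{..<n}. lam (Hp m (C i)) (\<delta> i) (E s i)) = 0" if sS: "s \<in> S - {\<alpha>}" for s
  proof -
    have "\<exists>i<n. E s i < \<delta> i"
    proof (rule ccontr)
      assume "\<not> (\<exists>i<n. E s i < \<delta> i)"
      then have ge: "\<forall>i\<in>{..<n}. \<delta> i \<le> E s i" by auto
      have "(\<Sum>i<n. E s i) = Suc (mdeg n s)" unfolding E_def mdeg_def by (rule sumE[OF jn])
      moreover have "(\<Sum>i<n. \<delta> i) = Suc (mdeg n \<alpha>)" unfolding \<delta>_def E_def mdeg_def by (rule sumE[OF jn])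
      moreover have "mdeg n s \<le> mdeg n \<alpha>" using degS sS degA by auto
      ultimately have le: "(\<Sum>i<n. E s i) \<le> (\<Sum>i<n. \<delta> i)" by simp
      have eq: "\<forall>i<n. E s i = \<delta> i"
      proof (rule ccontr)
        assume "\<not> (\<forall>i<n. E s i = \<delta> i)"
        then obtain i where "i < n" "\<delta> i < E s i" using ge by (metis le_neq_implies_less lessThan_iff)
        then have "(\<Sum>i<n. \<delta> i) < (\<Sum>i<n. E s i)"
          using ge by (intro sum_strict_mono_ex1) auto
        then show False using le by simp
      qed
      have "s = \<alpha>"
      proof
        fix i
        show "s i = \<alpha> i"
        proof (cases "i < n")
          case True
          then show ?thesis using eq by (cases "i = j") (auto simp: E_def \<delta>_def)
        next
          case False
          then show ?thesis using zS sS aS by (metis DiffD1 not_less)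
        qed
      qed
      then show False using sS by simp
    qed
    then obtain i where i: "i < n" "E s i < \<delta> i" by blast
    then have "lam (Hp m (C i)) (\<delta> i) (E s i) = 0"
      using degH[of i] by (subst lam_small) (auto simp: degree_Hp)
    then show ?thesis using i by (auto intro: prod_zero)
  qed
  have self: "(\<Prod>i\<in>{..<n}. lam (Hp m (C i)) (\<delta> i) (E \<alpha> i)) = 1"
    using degH by (intro prod.neutral) (auto simp: lam_small degree_Hp \<delta>_def)
  have "(\<Sum>s\<in>S. P0 s * (\<Prod>i\<in>{..<n}. lam (Hp m (C i)) (\<delta> i) (E s i))) =
        P0 \<alpha> * (\<Prod>i\<in>{..<n}. lam (Hp m (C i)) (\<delta> i) (E \<alpha> i)) +
        (\<Sum>s\<in>S-{\<alpha>}. P0 s * (\<Prod>i\<in>{..<n}. lam (Hp m (C i)) (\<delta> i) (E s i)))"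
    by (rule sum.remove[OF finS aS])
  also have "(\<Sum>s\<in>S-{\<alpha>}. P0 s * (\<Prod>i\<in>{..<n}. lam (Hp m (C i)) (\<delta> i) (E s i))) = 0"
    using other by (intro sum.neutral) auto
  finally have "P0 \<alpha> = 0" using T self by simp
  then show False using P0a by simp
qed


theorem claim5p3:
  fixes n m k :: nat and P0 :: mpoly
  assumes "m \<ge> 1" and "k \<ge> 2" and "n \<ge> k - 1"
    and "reduced n m k P0"
    and "\<And>a::nat \<Rightarrow> nat. (\<forall>i<n. a i \<le> m) \<Longrightarrow> (\<exists>i<n. a i \<noteq> 0) \<Longrightarrow>
           zero_mult_ge n (mminus (prod_vars n (shifted_ffact m ^ k)) P0) (\<lambda>i. real (a i)) k"
    and "zero_mult_ge n (mminus (prod_vars n (shifted_ffact m ^ k)) P0) (\<lambda>_. 0) (k - 1)"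
  shows "mdvd n (xprod_pow n m) (hom_comp n (m * n + (m + 1) * (k - 1) - 1) P0)"
proof -
  define D where "D = m * n + (m + 1) * (k - 1) - 1"
  define H where "H = hom_comp n D P0"
  have red: "reduced n m k P0" by fact
  have finP0: "finite {\<mu>. P0 \<mu> \<noteq> 0}" and zP0: "\<forall>\<mu>. P0 \<mu> \<noteq> 0 \<longrightarrow> (\<forall>i\<ge>n. \<mu> i = 0)"
    using red by (auto simp: reduced_def is_mpoly_def)
  have key2: "(\<forall>i<n. m \<le> \<mu> i) \<and> (\<forall>i\<ge>n. \<mu> i = 0)" if "H \<mu> \<noteq> 0" for \<mu>
  proof -
    have "P0 \<mu> \<noteq> 0" "mdeg n \<mu> = D" using that by (auto simp: H_def hom_comp_def split: if_splits)
    then show ?thesis using key[OF assms(1,2,4,5)] zP0 unfolding D_def by blast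
  qed
  have finH: "finite {\<mu>. H \<mu> \<noteq> 0}"
    by (rule finite_subset[OF _ finP0]) (auto simp: H_def hom_comp_def)
  define b0 where "b0 = (\<lambda>i::nat. if i < n then m else 0)"
  define R where "R \<mu> = (if \<forall>i\<ge>n. \<mu> i = 0 then H (\<lambda>i. if i < n then \<mu> i + m else 0) else 0)" for \<mu>
  have isR: "is_mpoly n R"
    unfolding is_mpoly_def
  proof
    have "{\<mu>. R \<mu> \<noteq> 0} \<subseteq> (\<lambda>\<nu>. \<lambda>i. \<nu> i - b0 i) ` {\<mu>. H \<mu> \<noteq> 0}"
    proof
      fix \<mu> assume "\<mu> \<in> {\<mu>. R \<mu> \<noteq> 0}"
      then have h: "\<forall>i\<ge>n. \<mu> i = 0" "H (\<lambda>i. if i < n then \<mu> i + m else 0) \<noteq> 0"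
        by (auto simp: R_def split: if_splits)
      have "\<mu> = (\<lambda>i. (\<lambda>i. if i < n then \<mu> i + m else 0) i - b0 i)"
        using h(1) by (auto simp: b0_def fun_eq_iff not_less)
      then show "\<mu> \<in> (\<lambda>\<nu>. \<lambda>i. \<nu> i - b0 i) ` {\<mu>. H \<mu> \<noteq> 0}" using h(2)
        by (intro image_eqI[of _ _ "\<lambda>i. if i < n then \<mu> i + m else 0"]) auto
    qed
    then show "finite {\<mu>. R \<mu> \<noteq> 0}" using finH finite_subset by blast
    show "\<forall>\<alpha>. R \<alpha> \<noteq> 0 \<longrightarrow> (\<forall>i\<ge>n. \<alpha> i = 0)" by (auto simp: R_def split: if_splits)
  qed
  have suppX: "{\<beta>. xprod_pow n m \<beta> \<noteq> 0} = {b0}"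
    by (auto simp: xprod_pow_def b0_def fun_eq_iff split: if_splits)
  have "H = mmul (xprod_pow n m) R"
  proof
    fix \<mu>
    have "mmul (xprod_pow n m) R \<mu> = (if \<forall>i. b0 i \<le> \<mu> i then R (\<lambda>i. \<mu> i - b0 i) else 0)"
      unfolding mmul_eq[of "xprod_pow n m", unfolded suppX, OF finite.insertI[OF finite.emptyI]]
      by (simp add: xprod_pow_def b0_def)
    also have "\<dots> = H \<mu>"
    proof (cases "(\<forall>i. b0 i \<le> \<mu> i) \<and> (\<forall>i\<ge>n. \<mu> i = 0)")
      case True
      then have "(\<lambda>i. if i < n then \<mu> i - b0 i + m else 0) = \<mu>"
        by (auto simp: fun_eq_iff b0_def not_less) (metis le_add_diff_inverse2)
      moreover have "\<forall>i\<ge>n. \<mu> i - b0 i = 0" using True by auto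
      ultimately show ?thesis using True by (simp add: R_def)
    next
      case False
      have "H \<mu> = 0"
      proof (rule ccontr)
        assume "H \<mu> \<noteq> 0"
        then have "(\<forall>i<n. m \<le> \<mu> i) \<and> (\<forall>i\<ge>n. \<mu> i = 0)" by (rule key2)
        then show False using False by (auto simp: b0_def split: if_splits)
      qed
      moreover have "R (\<lambda>i. \<mu> i - b0 i) = 0" if "\<forall>i. b0 i \<le> \<mu> i"
      proof -
        have "\<not> (\<forall>i\<ge>n. \<mu> i = 0)" using False that by blast
        then obtain i where "i \<ge> n" "\<mu> i \<noteq> 0" by auto
        then have "\<not> (\<forall>i\<ge>n. \<mu> i - b0 i = 0)" by (auto simp: b0_def)
        then show ?thesis unfolding R_def by (simp only: if_False)
      qed
      ultimately show ?thesis by auto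
    qed
    finally show "H \<mu> = mmul (xprod_pow n m) R \<mu>" by simp
  qed
  then show ?thesis unfolding mdvd_def H_def D_def using isR by blast
qed

end
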